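(* If $(T_1,T_2,c)\in\mathcal A_2^{\rm sp}$, then $T_1$ is not weakly embeddable in $T_2$; that is, there is no map $f:T_1\to T_2$ such that $x<_{T_1}y$ implies $f(x)<_{T_2}f(y)$.
   Context: For an ordinal $\gamma<\omega_1$, ${\rm ht}(\gamma)$ denotes the unique $\alpha$ with $\gamma\in[\omega\alpha,\omega\alpha+\omega)$. $\mathcal A$ denotes the set of all trees $T$ whose underlying set is $\{\langle\rangle\}\cup X$ for some $X\subseteq\omega_1$, where $\langle\rangle$ is the root (below every other element; considered to be of level $-1$), such that $T$ has height $\omega_1$, has no uncountable branch, is normal (two distinct elements of the same limit level have different sets of predecessors), and for every $\alpha<\omega_1$ the $\alpha$-th level ${\rm lev}_\alpha(T)$ is a subset of $[\omega\alpha,\omega\alpha+\omega)$ (so the tree height of $\gamma\ne\langle\rangle$ equals ${\rm ht}(\gamma)$). For $x,y\in T$, $x\cap_T y$ denotes the $<_T$-greatest element below or equal to both (the meet); $x\perp_T y$ means $x,y$ are $<_T$-incomparable. For $T_1,T_2\in\mathcal A$ and a pair $(x,y)\in{\rm lev}_\alpha(T_1)\times{\rm lev}_\alpha(T_2)$, $\alpha(x,y)$ denotes this $\alpha$. $\mathcal A_2^{\rm sp}$ is the set of all triples $(T_1,T_2,c)$ with $T_1,T_2\in\mathcal A$ and $c$ a function from $\bigcup_{\delta<\omega_1\text{ limit}}{\rm lev}_\delta(T_1)\times{\rm lev}_\delta(T_2)$ to $\omega$ such that whenever $c(x_1,y_1)=c(x_2,y_2)$ and $(x_1,y_1)\neq(x_2,y_2)$,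 then $\alpha(x_1,y_1)\ne\alpha(x_2,y_2)$, $x_1\perp_{T_1}x_2$, $y_1\perp_{T_2}y_2$, and ${\rm ht}(x_1\cap_{T_1}x_2)>{\rm ht}(y_1\cap_{T_2}y_2)$. *)

theory Defs
  imports "HOL-Library.Countable_Set"
begin

text \<open>
The countable ordinals are modelled by a wellordered type 'a that is
order-isomorphic to omega_1 (uncountable, every proper initial segment countable).
An ordinal gamma < omega_1 is written uniquely as omega*alpha + n; we represent it
by the pair (alpha, n) :: 'a * nat, so ht(gamma) = fst.  The root is None.
\<close>

type_synonym 'a node = "('a \<times> nat) option"
type_synonym 'a tree = "'a node set \<times> ('a node \<Rightarrow> 'a node \<Rightarrow> bool)"

definition omega1_type :: "'a::wellorder itself \<Rightarrow> bool" where
  "omega1_type _ \<longleftrightarrow> uncountable (UNIV :: 'a set) \<and> (\<forall>x::'a. countable {..<x})"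

definition ht :: "'a node \<Rightarrow> 'a" where
  "ht x = fst (the x)"

definition tlev :: "'a tree \<Rightarrow> 'a \<Rightarrow> 'a node set" where
  "tlev T \<alpha> = {x \<in> fst T. x \<noteq> None \<and> ht x = \<alpha>}"

definition is_limit :: "'a::wellorder \<Rightarrow> bool" where
  "is_limit \<alpha> \<longleftrightarrow> (\<exists>\<beta>. \<beta> < \<alpha>) \<and> (\<forall>\<beta><\<alpha>. \<exists>\<gamma>. \<beta> < \<gamma> \<and> \<gamma> < \<alpha>)"

definition tle :: "'a tree \<Rightarrow> 'a node \<Rightarrow> 'a node \<Rightarrow> bool" where
  "tle T x y \<longleftrightarrow> snd T x y \<or> x = y"

definition tcomp :: "'a tree \<Rightarrow> 'a node \<Rightarrow> 'a node \<Rightarrow> bool" where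
  "tcomp T x y \<longleftrightarrow> tle T x y \<or> tle T y x"

definition tchain :: "'a tree \<Rightarrow> 'a node set \<Rightarrow> bool" where
  "tchain T B \<longleftrightarrow> B \<subseteq> fst T \<and> (\<forall>x\<in>B. \<forall>y\<in>B. tcomp T x y)"

definition tbranch :: "'a tree \<Rightarrow> 'a node set \<Rightarrow> bool" where
  "tbranch T B \<longleftrightarrow> tchain T B \<and> (\<forall>C. tchain T C \<and> B \<subseteq> C \<longrightarrow> C = B)"

text \<open>Membership in the class A: a tree on {root} union X (X subset of omega_1),
levels lev_alpha inside [omega alpha, omega alpha + omega), height omega_1,
normal, no uncountable branch.\<close>
definition in_A :: "'a::wellorder tree \<Rightarrow> bool" where
  "in_A T \<longleftrightarrow>
     (let N = fst T; R = snd T in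
       None \<in> N
     \<and> (\<forall>x y. R x y \<longrightarrow> x \<in> N \<and> y \<in> N)
     \<and> (\<forall>x\<in>N. \<not> R x x)
     \<and> (\<forall>x\<in>N. \<forall>y\<in>N. \<forall>z\<in>N. R x y \<longrightarrow> R y z \<longrightarrow> R x z)
     \<and> (\<forall>x\<in>N. x \<noteq> None \<longrightarrow> R None x)
     \<and> (\<forall>x\<in>N. \<forall>y\<in>N. \<forall>z\<in>N. R y x \<longrightarrow> R z x \<longrightarrow> tcomp T y z)
     \<and> (\<forall>x\<in>N. \<forall>y\<in>N. x \<noteq> None \<longrightarrow> y \<noteq> None \<longrightarrow> R x y \<longrightarrow> ht x < ht y)
     \<and> (\<forall>x\<in>N. x \<noteq> None \<longrightarrow> (\<forall>\<beta><ht x. \<exists>y\<in>tlev T \<beta>. R y x))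
     \<and> (\<forall>\<alpha>. tlev T \<alpha> \<noteq> {})
     \<and> (\<forall>\<delta>. is_limit \<delta> \<longrightarrow> (\<forall>x\<in>tlev T \<delta>. \<forall>y\<in>tlev T \<delta>.
           {z. R z x} = {z. R z y} \<longrightarrow> x = y))
     \<and> (\<forall>B. tbranch T B \<longrightarrow> countable B))"

definition tmeet :: "'a tree \<Rightarrow> 'a node \<Rightarrow> 'a node \<Rightarrow> 'a node" where
  "tmeet T x y = (THE z. z \<in> fst T \<and> tle T z x \<and> tle T z y \<and>
                    (\<forall>w\<in>fst T. tle T w x \<and> tle T w y \<longrightarrow> tle T w z))"

definition tperp :: "'a tree \<Rightarrow> 'a node \<Rightarrow> 'a node \<Rightarrow> bool" where
  "tperp T x y \<longleftrightarrow> \<not> tcomp T x y"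

text \<open>ht(a) > ht(b) where the root has height -1.\<close>
definition ht_gt :: "'a::wellorder node \<Rightarrow> 'a node \<Rightarrow> bool" where
  "ht_gt a b \<longleftrightarrow> a \<noteq> None \<and> (b = None \<or> ht b < ht a)"

definition sp_dom :: "'a::wellorder tree \<Rightarrow> 'a tree \<Rightarrow> ('a node \<times> 'a node) set" where
  "sp_dom T1 T2 = (\<Union>\<delta>\<in>{\<delta>. is_limit \<delta>}. tlev T1 \<delta> \<times> tlev T2 \<delta>)"

definition in_A2sp :: "'a::wellorder tree \<Rightarrow> 'a tree \<Rightarrow> ('a node \<times> 'a node \<Rightarrow> nat) \<Rightarrow> bool" where
  "in_A2sp T1 T2 c \<longleftrightarrow> in_A T1 \<and> in_A T2 \<and>
     (\<forall>p\<in>sp_dom T1 T2. \<forall>q\<in>sp_dom T1 T2. c p = c q \<longrightarrow> p \<noteq> q \<longrightarrow>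
        (let (x1, y1) = p; (x2, y2) = q in
           ht x1 \<noteq> ht x2 \<and> tperp T1 x1 x2 \<and> tperp T2 y1 y2
           \<and> ht_gt (tmeet T1 x1 x2) (tmeet T2 y1 y2)))"

definition weakly_embeddable :: "'a tree \<Rightarrow> 'a tree \<Rightarrow> bool" where
  "weakly_embeddable T1 T2 \<longleftrightarrow> (\<exists>f. (\<forall>x\<in>fst T1. f x \<in> fst T2) \<and>
     (\<forall>x\<in>fst T1. \<forall>y\<in>fst T1. snd T1 x y \<longrightarrow> snd T2 (f x) (f y)))"

end

theory Submission
  imports Defs
begin

lemma A_root: "in_A T \<Longrightarrow> None \<in> fst T"
  unfolding in_A_def Let_def by (elim conjE)
lemma C2: "in_A T \<Longrightarrow> \<forall>x y. snd T x y \<longrightarrow> x \<in> fst T \<and> y \<in> fst T"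
  unfolding in_A_def Let_def by (elim conjE)
lemma C3: "in_A T \<Longrightarrow> \<forall>x\<in>fst T. \<not> snd T x x"
  unfolding in_A_def Let_def by (elim conjE)
lemma C4: "in_A T \<Longrightarrow> \<forall>x\<in>fst T. \<forall>y\<in>fst T. \<forall>z\<in>fst T. snd T x y \<longrightarrow> snd T y z \<longrightarrow> snd T x z"
  unfolding in_A_def Let_def by (elim conjE)
lemma C5: "in_A T \<Longrightarrow> \<forall>x\<in>fst T. x \<noteq> None \<longrightarrow> snd T None x"
  unfolding in_A_def Let_def by (elim conjE)
lemma C6: "in_A T \<Longrightarrow> \<forall>x\<in>fst T. \<forall>y\<in>fst T. \<forall>z\<in>fst T. snd T y x \<longrightarrow> snd T z x \<longrightarrow> tcomp T y z"
  unfolding in_A_def Let_def by (elim conjE)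
lemma C7: "in_A T \<Longrightarrow> \<forall>x\<in>fst T. \<forall>y\<in>fst T. x \<noteq> None \<longrightarrow> y \<noteq> None \<longrightarrow> snd T x y \<longrightarrow> ht x < ht y"
  unfolding in_A_def Let_def by (elim conjE)
lemma C8: "in_A T \<Longrightarrow> \<forall>x\<in>fst T. x \<noteq> None \<longrightarrow> (\<forall>\<beta><ht x. \<exists>y\<in>tlev T \<beta>. snd T y x)"
  unfolding in_A_def Let_def by (elim conjE)
lemma C9: "in_A T \<Longrightarrow> \<forall>\<alpha>. tlev T \<alpha> \<noteq> {}"
  unfolding in_A_def Let_def by (elim conjE)
lemma C10: "in_A T \<Longrightarrow> \<forall>\<delta>. is_limit \<delta> \<longrightarrow> (\<forall>x\<in>tlev T \<delta>. \<forall>y\<in>tlev T \<delta>.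
           {z. snd T z x} = {z. snd T z y} \<longrightarrow> x = y)"
  unfolding in_A_def Let_def by (elim conjE)

lemma A_dom: "in_A T \<Longrightarrow> snd T x y \<Longrightarrow> x \<in> fst T \<and> y \<in> fst T"
  using C2 by blast
lemma A_irr: "in_A T \<Longrightarrow> x \<in> fst T \<Longrightarrow> \<not> snd T x x"
  using C3 by blast
lemma A_trans: "in_A T \<Longrightarrow> snd T x y \<Longrightarrow> snd T y z \<Longrightarrow> snd T x z"
proof -
  assume a: "in_A T" "snd T x y" "snd T y z"
  then have "x \<in> fst T" "y \<in> fst T" "z \<in> fst T" using A_dom by blast+
  then show ?thesis using a C4[OF a(1)] by blast
qed
lemma A_rootbelow: "in_A T \<Longrightarrow> x \<in> fst T \<Longrightarrow> x \<noteq> None \<Longrightarrow> snd T None x"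
  using C5 by blast
lemma A_pred_comp: "in_A T \<Longrightarrow> snd T y x \<Longrightarrow> snd T z x \<Longrightarrow> tcomp T y z"
proof -
  assume a: "in_A T" "snd T y x" "snd T z x"
  then have "x \<in> fst T" "y \<in> fst T" "z \<in> fst T" using A_dom by blast+
  then show ?thesis using a C6[OF a(1)] by blast
qed
lemma A_ht: "in_A T \<Longrightarrow> snd T x y \<Longrightarrow> x \<noteq> None \<Longrightarrow> y \<noteq> None \<Longrightarrow> ht x < ht y"
proof -
  assume a: "in_A T" "snd T x y" "x \<noteq> None" "y \<noteq> None"
  then have "x \<in> fst T" "y \<in> fst T" using A_dom by blast+
  then show ?thesis using a C7[OF a(1)] by blast
qed
lemma A_pred_lev: "in_A T \<Longrightarrow> x \<in> fst T \<Longrightarrow> x \<noteq> None \<Longrightarrow> \<beta> < ht x \<Longrightarrow> \<exists>y\<in>tlev T \<beta>. snd T y x"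
  using C8 by blast
lemma A_lev_ne: "in_A T \<Longrightarrow> tlev T \<alpha> \<noteq> {}"
  using C9 by blast
lemma A_normal: "in_A T \<Longrightarrow> is_limit \<delta> \<Longrightarrow> x\<in>tlev T \<delta> \<Longrightarrow> y \<in> tlev T \<delta> \<Longrightarrow> {z. snd T z x} = {z. snd T z y} \<Longrightarrow> x = y"
proof -
  assume a: "in_A T" "is_limit \<delta>" "x\<in>tlev T \<delta>" "y \<in> tlev T \<delta>" "{z. snd T z x} = {z. snd T z y}"
  have "\<forall>x\<in>tlev T \<delta>. \<forall>y\<in>tlev T \<delta>. {z. snd T z x} = {z. snd T z y} \<longrightarrow> x = y"
    using C10[OF a(1)] a(2) by simp
  then show ?thesis using a(3,4,5) by simp
qed
lemma lev_mem: "x \<in> tlev T \<alpha> \<longleftrightarrow> x \<in> fst T \<and> x \<noteq> None \<and> ht x = \<alpha>"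
  by (simp add: tlev_def)

lemma A_notNone: "in_A T \<Longrightarrow> \<not> snd T x None"
proof
  assume a: "in_A T" "snd T x None"
  then have x: "x \<in> fst T" using A_dom by blast
  show False
  proof (cases "x = None")
    case True then show False using a A_irr x by blast
  next
    case False then have "snd T None x" using A_rootbelow a x by blast
    then have "snd T None None" using A_trans a by blast
    then show False using A_irr A_root a by blast
  qed
qed

lemma tle_comp: "in_A T \<Longrightarrow> tle T a x \<Longrightarrow> tle T b x \<Longrightarrow> tcomp T a b"
  unfolding tle_def tcomp_def using A_pred_comp unfolding tcomp_def tle_def by blast

lemma tle_trans: "in_A T \<Longrightarrow> tle T a b \<Longrightarrow> tle T b c \<Longrightarrow> tle T a c"
  unfolding tle_def using A_trans by blast

lemma tle_antisym: "in_A T \<Longrightarrow> tle T a b \<Longrightarrow> tle T b a \<Longrightarrow> a = b"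
  unfolding tle_def using A_trans A_irr A_dom by blast

lemma tle_ht: "in_A T \<Longrightarrow> tle T a b \<Longrightarrow> a \<noteq> None \<Longrightarrow> b \<noteq> None \<and> ht a \<le> ht b"
  unfolding tle_def using A_ht A_notNone by (metis order.strict_implies_order order_refl)

lemma bounded_countable:
  assumes "omega1_type TYPE('a::wellorder)" "countable (A::'a set)"
  shows "\<exists>u. \<forall>a\<in>A. a < u"
proof (rule ccontr)
  assume "\<not> ?thesis"
  then have "UNIV \<subseteq> (\<Union>a\<in>A. {..a})" by (auto simp: not_less)
  moreover have "countable (\<Union>a\<in>A. {..a})"
  proof (rule countable_UN[OF assms(2)])
    fix a :: 'a
    have "{..a} = insert a {..<a}" by auto
    then show "countable {..a}" using assms(1) unfolding omega1_type_def by simp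
  qed
  ultimately show False using assms(1) unfolding omega1_type_def
    using countable_subset by blast
qed

lemma below_countable:
  assumes "omega1_type TYPE('a::wellorder)"
  shows "countable {z::'a node. z \<noteq> None \<and> ht z < \<beta>}"
proof -
  have "{z::'a node. z \<noteq> None \<and> ht z < \<beta>} \<subseteq> Some ` ({..<\<beta>} \<times> UNIV)"
  proof
    fix z :: "'a node" assume z: "z \<in> {z. z \<noteq> None \<and> ht z < \<beta>}"
    then obtain a n where zs: "z = Some (a, n)" by (cases z) auto
    then have "a < \<beta>" using z by (simp add: ht_def)
    then show "z \<in> Some ` ({..<\<beta>} \<times> UNIV)" using zs by blast
  qed
  moreover have "countable ({..<\<beta>} \<times> (UNIV::nat set))"
    using assms unfolding omega1_type_def by simp
  then have "countable (Some ` ({..<\<beta>} \<times> (UNIV::nat set)))" by (rule countable_image)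
  ultimately show ?thesis by (rule countable_subset)
qed


lemma meet_exists:
  assumes A: "in_A T" and x: "x \<in> fst T" and x': "x' \<in> fst T"
  shows "\<exists>z. z \<in> fst T \<and> tle T z x \<and> tle T z x' \<and> (\<forall>w\<in>fst T. tle T w x \<and> tle T w x' \<longrightarrow> tle T w z)"
proof (rule ccontr)
  assume nex: "\<not> ?thesis"
  define L where "L = {w\<in>fst T. tle T w x \<and> tle T w x'}"
  have noL: "x \<notin> L" using nex x unfolding L_def tle_def by auto
  have noL': "x' \<notin> L" using nex x' unfolding L_def tle_def by auto
  have Lx: "snd T w x \<and> snd T w x'" if "w \<in> L" for w
    using that noL noL' unfolding L_def tle_def by auto
  have noMax: "\<exists>w\<in>L. snd T l w" if l: "l \<in> L" for l
  proof -
    from nex l obtain w where w: "w \<in> fst T" "tle T w x" "tle T w x'" "\<not> tle T w l"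
      unfolding L_def by blast
    have "tle T l x" using l unfolding L_def by blast
    then have "tcomp T w l" using tle_comp[OF A w(2)] by blast
    then have "tle T l w" using w(4) unfolding tcomp_def by blast
    moreover have "l \<noteq> w" using w(4) unfolding tle_def by blast
    ultimately have "snd T l w" unfolding tle_def by blast
    moreover have "w \<in> L" using w unfolding L_def by blast
    ultimately show ?thesis by blast
  qed
  have NoneL: "None \<in> L"
  proof -
    have "tle T None x" using A_rootbelow[OF A x] unfolding tle_def by (cases "x = None") auto
    moreover have "tle T None x'" using A_rootbelow[OF A x'] unfolding tle_def by (cases "x' = None") auto
    ultimately show ?thesis unfolding L_def using A_root[OF A] by simp
  qed
  define H where "H = ht ` (L - {None})"
  have xN: "x \<noteq> None" "x' \<noteq> None" using Lx[OF NoneL] A_notNone[OF A] by metis+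
  have Hlt: "h < ht x \<and> h < ht x'" if "h \<in> H" for h
    using that Lx A_ht[OF A] xN unfolding H_def by blast
  obtain l0 where l0: "l0 \<in> L" "snd T None l0" using noMax[OF NoneL] by blast
  have l0N: "l0 \<noteq> None" using l0 A_notNone[OF A] by metis
  have l0H: "ht l0 \<in> H" using l0 l0N unfolding H_def by blast
  have Hnomax: "\<exists>h'\<in>H. h < h'" if "h \<in> H" for h
  proof -
    from that obtain l where l: "l \<in> L" "l \<noteq> None" "h = ht l" unfolding H_def by blast
    then obtain w where w: "w \<in> L" "snd T l w" using noMax by blast
    then have "w \<noteq> None" using A_notNone[OF A] by metis
    then have "ht l < ht w" using A_ht[OF A w(2) l(2)] by blast
    then show ?thesis using w \<open>w \<noteq> None\<close> l unfolding H_def by blast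
  qed
  define \<eta> where "\<eta> = (LEAST \<gamma>. \<forall>h\<in>H. h < \<gamma>)"
  have \<eta>ub: "\<forall>h\<in>H. h < \<eta>" unfolding \<eta>_def by (rule LeastI[of _ "ht x"]) (use Hlt in blast)
  have \<eta>le: "\<eta> \<le> ht x" "\<eta> \<le> ht x'" unfolding \<eta>_def by (rule Least_le, use Hlt in blast)+
  have below: "\<exists>h\<in>H. \<beta> < h" if "\<beta> < \<eta>" for \<beta>
  proof -
    have "\<not> (\<forall>h\<in>H. h < \<beta>)" using not_less_Least[OF that[unfolded \<eta>_def]] by blast
    then obtain h where h: "h \<in> H" "\<beta> \<le> h" by (auto simp: not_less)
    then obtain h' where "h' \<in> H" "h < h'" using Hnomax by blast
    then show ?thesis using h by (meson order.strict_trans1)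
  qed
  have lim: "is_limit \<eta>" unfolding is_limit_def
    using l0H \<eta>ub below by blast
  have pick: "\<exists>p\<in>tlev T \<eta>. tle T p v" if vv: "v \<in> fst T" "v \<noteq> None" "\<eta> \<le> ht v" for v
  proof (cases "\<eta> = ht v")
    case True then show ?thesis using that by (intro bexI[of _ v]) (auto simp: lev_mem tle_def)
  next
    case False then have "\<eta> < ht v" using that by simp
    then obtain p where "p \<in> tlev T \<eta>" "snd T p v" using A_pred_lev[OF A vv(1,2)] by blast
    then show ?thesis unfolding tle_def by blast
  qed
  obtain p where p: "p \<in> tlev T \<eta>" "tle T p x" using pick[OF x xN(1) \<eta>le(1)] by blast
  obtain p' where p': "p' \<in> tlev T \<eta>" "tle T p' x'" using pick[OF x' xN(2) \<eta>le(2)] by blast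
  have predL: "{w. snd T w q} = L" if q: "q \<in> tlev T \<eta>" "tle T q v" and v: "v = x \<or> v = x'" for q v
  proof (rule set_eqI, rule iffI)
    fix w assume "w \<in> {w. snd T w q}"
    then have wq: "snd T w q" by simp
    then have wN: "w \<in> fst T" using A_dom[OF A] by blast
    show "w \<in> L"
    proof (cases "w = None")
      case True then show ?thesis using NoneL by simp
    next
      case False
      have "ht w < \<eta>" using A_ht[OF A wq False] q(1) unfolding lev_mem by blast
      then obtain h where h: "h \<in> H" "ht w < h" using below by blast
      then obtain l where l: "l \<in> L" "l \<noteq> None" "h = ht l" unfolding H_def by blast
      have wv: "snd T w v" using wq q(2) A_trans[OF A] unfolding tle_def by blast
      have lv: "snd T l v" using Lx[OF l(1)] v by blast
      have "tcomp T w l" using A_pred_comp[OF A wv lv] .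
      moreover have "\<not> tle T l w" using tle_ht[OF A _ l(2)] h l(3) by (meson leD)
      ultimately have "tle T w l" unfolding tcomp_def by blast
      then show ?thesis using l(1) wN tle_trans[OF A] unfolding L_def by blast
    qed
  next
    fix w assume w: "w \<in> L"
    have wv: "snd T w v" using Lx[OF w] v by blast
    have qN: "q \<in> fst T" "q \<noteq> None" "ht q = \<eta>" using q(1) unfolding lev_mem by auto
    show "w \<in> {w. snd T w q}"
    proof (cases "w = None")
      case True then show ?thesis using A_rootbelow[OF A qN(1,2)] by simp
    next
      case False
      then have hw: "ht w < \<eta>" using w \<eta>ub unfolding H_def by blast
      have "tcomp T w q" using tle_comp[OF A _ q(2)] wv unfolding tle_def by blast
      moreover have "\<not> tle T q w" using tle_ht[OF A _ qN(2)] hw qN(3) by (meson leD)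
      ultimately have "tle T w q" unfolding tcomp_def by blast
      moreover have "w \<noteq> q" using hw qN(3) by auto
      ultimately show ?thesis unfolding tle_def by simp
    qed
  qed
  have "p = p'" using A_normal[OF A lim p(1) p'(1)] predL[OF p] predL[OF p'] by blast
  then have "p \<in> L" using p p' unfolding L_def lev_mem by blast
  moreover have "p \<noteq> None" "ht p = \<eta>" using p(1) unfolding lev_mem by auto
  ultimately show False using \<eta>ub unfolding H_def by blast
qed

lemma tmeet_props:
  assumes A: "in_A T" and "x \<in> fst T" "x' \<in> fst T"
  shows "tmeet T x x' \<in> fst T \<and> tle T (tmeet T x x') x \<and> tle T (tmeet T x x') x'
    \<and> (\<forall>w\<in>fst T. tle T w x \<and> tle T w x' \<longrightarrow> tle T w (tmeet T x x'))"
proof -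
  obtain z where z: "z \<in> fst T \<and> tle T z x \<and> tle T z x' \<and> (\<forall>w\<in>fst T. tle T w x \<and> tle T w x' \<longrightarrow> tle T w z)"
    using meet_exists assms by blast
  have "tmeet T x x' = z" unfolding tmeet_def
  proof (rule the_equality)
    show "z \<in> fst T \<and> tle T z x \<and> tle T z x' \<and> (\<forall>w\<in>fst T. tle T w x \<and> tle T w x' \<longrightarrow> tle T w z)" using z .
    fix z' assume "z' \<in> fst T \<and> tle T z' x \<and> tle T z' x' \<and> (\<forall>w\<in>fst T. tle T w x \<and> tle T w x' \<longrightarrow> tle T w z')"
    then show "z' = z" using z tle_antisym[OF A] by blast
  qed
  then show ?thesis using z by simp
qed


theorem claim3p4:
  fixes T1 T2 :: "'a::wellorder tree" and c :: "'a node \<times> 'a node \<Rightarrow> nat"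
  assumes "omega1_type TYPE('a)"
    and "in_A2sp T1 T2 c"
  shows "\<not> weakly_embeddable T1 T2"
proof
  assume "weakly_embeddable T1 T2"
  then obtain f where fN: "\<forall>x\<in>fst T1. f x \<in> fst T2"
    and fR: "\<forall>x\<in>fst T1. \<forall>y\<in>fst T1. snd T1 x y \<longrightarrow> snd T2 (f x) (f y)"
    unfolding weakly_embeddable_def by blast
  have A1: "in_A T1" and A2: "in_A T2" using assms(2) unfolding in_A2sp_def by auto
  have fR': "snd T2 (f x) (f y)" if "snd T1 x y" for x y using fR A_dom[OF A1 that] that by blast
  have fnone: "f x \<noteq> None" if "x \<in> fst T1" "x \<noteq> None" for x
    using fR'[OF A_rootbelow[OF A1 that]] A_notNone[OF A2] by metis
  have fht: "x \<in> fst T1 \<Longrightarrow> x \<noteq> None \<Longrightarrow> ht x \<le> ht (f x)" for x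
  proof (induction "ht x" arbitrary: x rule: less_induct)
    case less
    show ?case
    proof (rule ccontr)
      assume "\<not> ht x \<le> ht (f x)"
      then have lt: "ht (f x) < ht x" by simp
      obtain y where y: "y \<in> tlev T1 (ht (f x))" "snd T1 y x"
        using A_pred_lev[OF A1 less.prems lt] by blast
      have yN: "y \<in> fst T1" "y \<noteq> None" "ht y = ht (f x)" using y(1) unfolding lev_mem by auto
      have "ht (f y) < ht (f x)" using A_ht[OF A2 fR'[OF y(2)] fnone[OF yN(1,2)] fnone[OF less.prems]] .
      moreover have "ht y \<le> ht (f y)" using less.hyps[OF _ yN(1,2)] lt yN(3) by simp
      ultimately show False using yN(3) by simp
    qed
  qed
  define good where "good \<delta> \<longleftrightarrow> is_limit \<delta> \<and> (\<forall>z\<in>fst T1. z \<noteq> None \<and> ht z < \<delta> \<longrightarrow> ht (f z) < \<delta>)" for \<delta>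
  have unb: "\<exists>\<delta>. \<gamma> < \<delta> \<and> good \<delta>" for \<gamma>
  proof -
    define nx where "nx \<beta> = (SOME u. \<beta> < u \<and> (\<forall>z\<in>fst T1. z \<noteq> None \<and> ht z < \<beta> \<longrightarrow> ht (f z) < u))" for \<beta>
    have nx: "\<beta> < nx \<beta> \<and> (\<forall>z\<in>fst T1. z \<noteq> None \<and> ht z < \<beta> \<longrightarrow> ht (f z) < nx \<beta>)" for \<beta>
    proof -
      have "countable (insert \<beta> ((\<lambda>z. ht (f z)) ` {z. z \<noteq> None \<and> ht z < \<beta>}))"
        using below_countable[OF assms(1)] by simp
      then obtain u where "\<forall>a\<in>insert \<beta> ((\<lambda>z. ht (f z)) ` {z. z \<noteq> None \<and> ht z < \<beta>}). a < u"
        using bounded_countable[OF assms(1)] by blast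
      then have "\<beta> < u \<and> (\<forall>z\<in>fst T1. z \<noteq> None \<and> ht z < \<beta> \<longrightarrow> ht (f z) < u)" by blast
      then show ?thesis unfolding nx_def by (rule someI)
    qed
    define d where "d = rec_nat \<gamma> (\<lambda>_ b. nx b)"
    have d0: "d 0 = \<gamma>" and dS: "d (Suc n) = nx (d n)" for n by (simp_all add: d_def)
    have dinc: "d n < d (Suc n)" for n using nx dS by simp
    have "countable (range d)" by (rule countable_image) simp
    then obtain u0 where "\<forall>a\<in>range d. a < u0" using bounded_countable[OF assms(1)] by blast
    define \<delta> where "\<delta> = (LEAST u. \<forall>n. d n < u)"
    have dlt: "d n < \<delta>" for n unfolding \<delta>_def by (rule LeastI2[of _ u0]) (use \<open>\<forall>a\<in>range d. a < u0\<close> in auto)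
    have below: "\<exists>n. \<beta> < d n" if "\<beta> < \<delta>" for \<beta>
    proof -
      have "\<not> (\<forall>n. d n < \<beta>)" using not_less_Least[OF that[unfolded \<delta>_def]] by blast
      then obtain n where "\<beta> \<le> d n" by (auto simp: not_less)
      then have "\<beta> < d (Suc n)" using dinc[of n] by (rule order.strict_trans1)
      then show ?thesis by blast
    qed
    have lim: "is_limit \<delta>" unfolding is_limit_def using dlt below by blast
    have "\<forall>z\<in>fst T1. z \<noteq> None \<and> ht z < \<delta> \<longrightarrow> ht (f z) < \<delta>"
    proof (intro ballI impI)
      fix z assume z: "z \<in> fst T1" "z \<noteq> None \<and> ht z < \<delta>"
      then obtain n where "ht z < d n" using below by blast
      then have "ht (f z) < d (Suc n)" using nx[of "d n"] z dS by simp
      then show "ht (f z) < \<delta>" using dlt by (meson order.strict_trans)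
    qed
    then show ?thesis using lim dlt[of 0] d0 unfolding good_def by blast
  qed
  have Sunc: "uncountable {\<delta>. good \<delta>}"
  proof
    assume "countable {\<delta>. good \<delta>}"
    then obtain u where "\<forall>a\<in>{\<delta>. good \<delta>}. a < u" using bounded_countable[OF assms(1)] by blast
    then show False using unb[of u] by auto
  qed
  have XY: "\<exists>p. good \<delta> \<longrightarrow> fst p \<in> tlev T1 \<delta> \<and> snd p \<in> tlev T2 \<delta> \<and> tle T2 (snd p) (f (fst p))" for \<delta>
  proof -
    obtain x where x: "x \<in> tlev T1 \<delta>" using A_lev_ne[OF A1] by blast
    have xN: "x \<in> fst T1" "x \<noteq> None" "ht x = \<delta>" using x unfolding lev_mem by auto
    have fx: "f x \<in> fst T2" "f x \<noteq> None" "\<delta> \<le> ht (f x)" using fN xN fnone fht by auto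
    have "\<exists>y\<in>tlev T2 \<delta>. tle T2 y (f x)"
    proof (cases "ht (f x) = \<delta>")
      case True then show ?thesis using fx by (intro bexI[of _ "f x"]) (auto simp: lev_mem tle_def)
    next
      case False then have "\<delta> < ht (f x)" using fx by simp
      then obtain y where "y \<in> tlev T2 \<delta>" "snd T2 y (f x)" using A_pred_lev[OF A2 fx(1,2)] by blast
      then show ?thesis unfolding tle_def by blast
    qed
    then show ?thesis using x by force
  qed
  obtain P where P: "\<forall>\<delta>. good \<delta> \<longrightarrow> fst (P \<delta>) \<in> tlev T1 \<delta> \<and> snd (P \<delta>) \<in> tlev T2 \<delta> \<and> tle T2 (snd (P \<delta>)) (f (fst (P \<delta>)))"
  proof -
    have "\<forall>\<delta>. \<exists>p. good \<delta> \<longrightarrow> fst p \<in> tlev T1 \<delta> \<and> snd p \<in> tlev T2 \<delta> \<and> tle T2 (snd p) (f (fst p))"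
      using XY by blast
    then show ?thesis using that by (rule choice[THEN exE])
  qed
  obtain n where n: "uncountable {\<delta>. good \<delta> \<and> c (P \<delta>) = n}"
  proof -
    have eq: "{\<delta>. good \<delta>} = (\<Union>n. {\<delta>. good \<delta> \<and> c (P \<delta>) = n})" by auto
    show ?thesis
    proof (rule ccontr)
      assume "\<not> thesis"
      then have "\<forall>n. countable {\<delta>. good \<delta> \<and> c (P \<delta>) = n}" using that by blast
      then have "countable (\<Union>n. {\<delta>. good \<delta> \<and> c (P \<delta>) = n})" by blast
      then show False using Sunc eq by simp
    qed
  qed
  obtain \<delta>1 where d1: "good \<delta>1" "c (P \<delta>1) = n"
    using n by (metis (mono_tags, lifting) countable_empty empty_Collect_eq)
  obtain \<delta>2 where d2: "good \<delta>2" "c (P \<delta>2) = n" "\<delta>2 \<noteq> \<delta>1"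
  proof -
    have "\<not> {\<delta>. good \<delta> \<and> c (P \<delta>) = n} \<subseteq> {\<delta>1}"
      using n countable_subset by (metis countable_insert countable_empty)
    then show ?thesis using that by blast
  qed
  define x1 y1 x2 y2 where "x1 = fst (P \<delta>1)" "y1 = snd (P \<delta>1)" "x2 = fst (P \<delta>2)" "y2 = snd (P \<delta>2)"
  have p1: "x1 \<in> tlev T1 \<delta>1" "y1 \<in> tlev T2 \<delta>1" "tle T2 y1 (f x1)" using P d1 unfolding x1_y1_x2_y2_def by auto
  have p2: "x2 \<in> tlev T1 \<delta>2" "y2 \<in> tlev T2 \<delta>2" "tle T2 y2 (f x2)" using P d2 unfolding x1_y1_x2_y2_def by auto
  have P1: "P \<delta>1 = (x1, y1)" and P2: "P \<delta>2 = (x2, y2)" unfolding x1_y1_x2_y2_def by simp_all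
  have sp1: "(x1, y1) \<in> sp_dom T1 T2" using p1 d1 unfolding sp_dom_def good_def by blast
  have sp2: "(x2, y2) \<in> sp_dom T1 T2" using p2 d2 unfolding sp_dom_def good_def by blast
  have neq: "(x1, y1) \<noteq> (x2, y2)" using p1 p2 d2(3) unfolding lev_mem by auto
  have "c (x1, y1) = c (x2, y2)" using d1 d2 P1 P2 by simp
  then have key: "tperp T1 x1 x2 \<and> ht_gt (tmeet T1 x1 x2) (tmeet T2 y1 y2)"
    using assms(2) sp1 sp2 neq unfolding in_A2sp_def by fastforce
  have x1N: "x1 \<in> fst T1" and x2N: "x2 \<in> fst T1" and y1N: "y1 \<in> fst T2" and y2N: "y2 \<in> fst T2"
    using p1 p2 unfolding lev_mem by auto
  define z where "z = tmeet T1 x1 x2"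
  define m where "m = tmeet T2 y1 y2"
  have zp: "z \<in> fst T1" "tle T1 z x1" "tle T1 z x2" using tmeet_props[OF A1 x1N x2N] unfolding z_def by auto
  have mp: "\<forall>w\<in>fst T2. tle T2 w y1 \<and> tle T2 w y2 \<longrightarrow> tle T2 w m" using tmeet_props[OF A2 y1N y2N] unfolding m_def by auto
  have zN: "z \<noteq> None" and hg: "m = None \<or> ht m < ht z" using key unfolding ht_gt_def z_def m_def by auto
  have zx1: "z \<noteq> x1" using zp key unfolding tperp_def tcomp_def by auto
  have zx2: "z \<noteq> x2" using zp key unfolding tperp_def tcomp_def by auto
  have R1: "snd T1 z x1" "snd T1 z x2" using zp zx1 zx2 unfolding tle_def by auto
  have fz_le: "tle T2 (f z) y" if g: "good \<delta>" and x: "x \<in> tlev T1 \<delta>" and y: "y \<in> tlev T2 \<delta>"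
    and yx: "tle T2 y (f x)" and zx: "snd T1 z x" for x y \<delta>
  proof -
    have xN: "x \<noteq> None" "ht x = \<delta>" using x unfolding lev_mem by auto
    have yN: "y \<noteq> None" "ht y = \<delta>" using y unfolding lev_mem by auto
    have "ht z < \<delta>" using A_ht[OF A1 zx zN xN(1)] xN(2) by simp
    then have hz: "ht (f z) < \<delta>" using g zp(1) zN unfolding good_def by blast
    have "tle T2 (f z) (f x)" using fR'[OF zx] unfolding tle_def by blast
    then have "tcomp T2 (f z) y" using tle_comp[OF A2 _ yx] by blast
    moreover have "\<not> tle T2 y (f z)" using tle_ht[OF A2 _ yN(1)] hz yN(2) by (meson leD)
    ultimately show ?thesis unfolding tcomp_def by blast
  qed
  have "tle T2 (f z) y1" using fz_le[OF d1(1) p1 R1(1)] .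
  moreover have "tle T2 (f z) y2" using fz_le[OF d2(1) p2 R1(2)] .
  ultimately have "tle T2 (f z) m" using mp fN zp(1) by blast
  then have "m \<noteq> None \<and> ht (f z) \<le> ht m" using tle_ht[OF A2] fnone[OF zp(1) zN] by blast
  moreover have "ht z \<le> ht (f z)" using fht[OF zp(1) zN] .
  ultimately show False using hg by auto
qed

end
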